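(* Fix an integer $k\ge2$ and $\delta\in(0,2)$. Let $\mathcal R_n(1),\dots,\mathcal R_n(k)$ be independent random sets, each distributed as $\mathcal S_{n,1}(1)$. Then, uniformly over $\bar J\in\mathcal B_{n,k,\delta}$, \[\mathbb P\big(\mathcal S_{n,1}(i)=J_i,\ i\in[k]\big)=(1+o(1))\,\mathbb P\big(\mathcal R_n(i)=J_i,\ i\in[k]\big)\quad\text{as }n\to\infty.\]
   Context: Kingman's $n$-coalescent $(F_n,\dots,F_1)$: forests on $[n]$; $F_n$ has no edges; for $2\le i\le n$, list the trees of $F_i$ as $T^{(i)}_1,\dots,T^{(i)}_i$ in increasing order of smallest label, choose $\{a_i,b_i\}$ uniformly among 2-subsets of $[i]$ and an independent fair bit $\xi_i$ (independent over $i$), and obtain $F_{i-1}$ by joining the roots of $T^{(i)}_{a_i},T^{(i)}_{b_i}$ by an edge directed according to $\xi_i$. $T_i(v)$ is the tree of $F_i$ containing $v$; $\mathcal S_n(v)=\{2\le i\le n:T_i(v)\in\{T^{(i)}_{a_i},T^{(i)}_{b_i}\}\}$; $\mathcal S_{n,1}(v)=\mathcal S_n(v)\setminus[\lfloor\ln^2 n\rfloor]$ (so $\mathcal S_{n,1}(1)$ contains each $m\in\{\lfloor\ln^2 n\rfloor+1,\dots,n\}$ independently with probability $2/m$). $\Omega_1$ is the power set of $\{\lfloor\ln^2 n\rfloor+1,\dots,n\}$, and for $\delta\in(0,2)$, $\mathcal B_{n,k,\delta}$ is the set of $\bar J=(J_1,\dots,J_k)\in\Omega_1^k$ with $J_1,\dots,J_k$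 pairwise disjoint and $||J_i|-2\ln n|\le\delta\ln n$ for all $i\in[k]$. *)

theory Defs
  imports "HOL-Probability.Probability"
begin

text \<open>Forests are represented by their vertex partitions (the set of vertex sets of their
trees); the sets S_n(v) only depend on which trees are merged.  The choice at step i is a
pair (2-subset of [i], fair bit).\<close>

definition block :: "nat set set \<Rightarrow> nat \<Rightarrow> nat set" where
  "block P j = (THE B. B \<in> P \<and> Min B = sorted_list_of_set (Min ` P) ! (j - 1))"

definition merge :: "nat set set \<Rightarrow> nat set \<Rightarrow> nat set set" where
  "merge P A = (P - block P ` A) \<union> {\<Union> (block P ` A)}"

fun coal :: "nat \<Rightarrow> (nat \<Rightarrow> nat set \<times> bool) \<Rightarrow> nat \<Rightarrow> nat set set" where
  "coal n c 0 = (\<lambda>v. {v}) ` {1..n}"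
| "coal n c (Suc d) = merge (coal n c d) (fst (c (n - d)))"

definition forest :: "nat \<Rightarrow> (nat \<Rightarrow> nat set \<times> bool) \<Rightarrow> nat \<Rightarrow> nat set set" where
  "forest n c i = coal n c (n - i)"

definition tree_of :: "nat set set \<Rightarrow> nat \<Rightarrow> nat set" where
  "tree_of P v = (THE B. B \<in> P \<and> v \<in> B)"

definition Sset :: "nat \<Rightarrow> (nat \<Rightarrow> nat set \<times> bool) \<Rightarrow> nat \<Rightarrow> nat set" where
  "Sset n c v = {i \<in> {2..n}. tree_of (forest n c i) v \<in> block (forest n c i) ` fst (c i)}"

definition Lcut :: "nat \<Rightarrow> nat" where
  "Lcut n = nat \<lfloor>(ln (real n))\<^sup>2\<rfloor>"

definition Sset1 :: "nat \<Rightarrow> (nat \<Rightarrow> nat set \<times> bool) \<Rightarrow> nat \<Rightarrow> nat set" where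
  "Sset1 n c v = Sset n c v - {1..Lcut n}"

definition choices :: "nat \<Rightarrow> (nat \<Rightarrow> nat set \<times> bool) set" where
  "choices n = (\<Pi>\<^sub>E i\<in>{2..n}. {A. A \<subseteq> {1..i} \<and> card A = 2} \<times> (UNIV :: bool set))"

definition coal_pmf :: "nat \<Rightarrow> (nat \<Rightarrow> nat set \<times> bool) pmf" where
  "coal_pmf n = pmf_of_set (choices n)"

definition Omega1 :: "nat \<Rightarrow> nat set set" where
  "Omega1 n = Pow {Lcut n + 1..n}"

definition Bset :: "nat \<Rightarrow> nat \<Rightarrow> real \<Rightarrow> (nat \<Rightarrow> nat set) set" where
  "Bset n k \<delta> = {J. (\<forall>i\<in>{1..k}. J i \<in> Omega1 n)
      \<and> (\<forall>i\<in>{1..k}. \<forall>j\<in>{1..k}. i \<noteq> j \<longrightarrow> J i \<inter> J j = {})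
      \<and> (\<forall>i\<in>{1..k}. \<bar>real (card (J i)) - 2 * ln (real n)\<bar> \<le> \<delta> * ln (real n))}"

definition PS :: "nat \<Rightarrow> nat \<Rightarrow> (nat \<Rightarrow> nat set) \<Rightarrow> real" where
  "PS n k J = measure_pmf.prob (coal_pmf n) {c. \<forall>i\<in>{1..k}. Sset1 n c i = J i}"

text \<open>P(R_n(i) = J_i, i \<in> [k]) for independent R_n(i) each distributed as S_{n,1}(1).\<close>
definition PR :: "nat \<Rightarrow> nat \<Rightarrow> (nat \<Rightarrow> nat set) \<Rightarrow> real" where
  "PR n k J = (\<Prod>i\<in>{1..k}. measure_pmf.prob (coal_pmf n) {c. Sset1 n c 1 = J i})"

end

theory Submission
  imports Defs "HOL-Real_Asymp.Real_Asymp"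
begin


definition wfp :: "nat \<Rightarrow> nat set set \<Rightarrow> bool" where
 "wfp n P \<longleftrightarrow> finite P \<and> (\<forall>B\<in>P. B \<noteq> {}) \<and> (\<forall>B\<in>P. \<forall>C\<in>P. B \<noteq> C \<longrightarrow> B \<inter> C = {}) \<and> \<Union>P = {1..n}"

lemma wfp_finB: "wfp n P \<Longrightarrow> B \<in> P \<Longrightarrow> finite B"
  unfolding wfp_def by (metis Union_upper finite_atLeastAtMost finite_subset)

lemma wfp_Min_inj: assumes "wfp n P" shows "inj_on Min P"
proof
  fix B C assume "B \<in> P" "C \<in> P" "Min B = Min C"
  have ne: "B \<noteq> {}" "C \<noteq> {}" using assms \<open>B \<in> P\<close> \<open>C \<in> P\<close> unfolding wfp_def by auto
  have "Min B \<in> B" using Min_in[OF wfp_finB[OF assms \<open>B \<in> P\<close>] ne(1)] .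
  moreover have "Min C \<in> C" using Min_in[OF wfp_finB[OF assms \<open>C \<in> P\<close>] ne(2)] .
  ultimately have "B \<inter> C \<noteq> {}" using \<open>Min B = Min C\<close> by auto
  then show "B = C" using assms \<open>B \<in> P\<close> \<open>C \<in> P\<close> unfolding wfp_def by blast
qed

lemma block_prop:
  assumes "wfp n P" "j \<in> {1..card P}"
  shows "block P j \<in> P \<and> Min (block P j) = sorted_list_of_set (Min ` P) ! (j - 1)"
proof -
  let ?xs = "sorted_list_of_set (Min ` P)"
  have fin: "finite P" using assms unfolding wfp_def by blast
  have len: "length ?xs = card P"
    using wfp_Min_inj[OF assms(1)] fin by (simp add: card_image)
  have "?xs ! (j - 1) \<in> Min ` P"
  proof -
    have "j - 1 < length ?xs" using len assms(2) by auto
    then have "?xs ! (j - 1) \<in> set ?xs" by (rule nth_mem)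
    then show ?thesis using fin by simp
  qed
  then obtain B where B: "B \<in> P" "Min B = ?xs ! (j - 1)" by (metis imageE)
  have "\<exists>!B. B \<in> P \<and> Min B = ?xs ! (j - 1)"
    using B wfp_Min_inj[OF assms(1)] by (metis inj_onD)
  then show ?thesis unfolding block_def by (rule theI')
qed

lemma block_bij: assumes "wfp n P" shows "bij_betw (block P) {1..card P} P"
proof -
  let ?xs = "sorted_list_of_set (Min ` P)"
  have fin: "finite P" using assms unfolding wfp_def by blast
  have len: "length ?xs = card P"
    using wfp_Min_inj[OF assms(1)] fin by (simp add: card_image)
  have dist: "distinct ?xs" by simp
  have inj: "inj_on (block P) {1..card P}"
  proof
    fix i j assume ij: "i \<in> {1..card P}" "j \<in> {1..card P}" "block P i = block P j"
    then have "?xs ! (i - 1) = ?xs ! (j - 1)" using block_prop[OF assms] by metis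
    moreover have "i - 1 < length ?xs" "j - 1 < length ?xs" using len ij(1,2) by auto
    ultimately have "i - 1 = j - 1" using dist nth_eq_iff_index_eq by blast
    then show "i = j" using ij by auto
  qed
  have sub: "block P ` {1..card P} \<subseteq> P" using block_prop[OF assms] by blast
  have "card (block P ` {1..card P}) = card P" using inj by (simp add: card_image)
  then have "block P ` {1..card P} = P" using sub fin by (simp add: card_subset_eq)
  then show ?thesis using inj by (simp add: bij_betw_def)
qed

lemma wfp_uniq: assumes "wfp n P" "B \<in> P" "C \<in> P" "v \<in> B" "v \<in> C" shows "B = C"
proof (rule ccontr)
  assume "B \<noteq> C"
  then have "B \<inter> C = {}" using assms(1-3) unfolding wfp_def by blast
  then show False using assms(4,5) by blast
qed

lemma wfp_ex1: assumes "wfp n P" "v \<in> {1..n}" shows "\<exists>!B. B \<in> P \<and> v \<in> B"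
proof -
  have "v \<in> \<Union>P" using assms unfolding wfp_def by simp
  then obtain B where "B \<in> P" "v \<in> B" by blast
  then show ?thesis using wfp_uniq[OF assms(1)] by blast
qed

lemma tree_of_prop: assumes "wfp n P" "v \<in> {1..n}"
  shows "tree_of P v \<in> P \<and> v \<in> tree_of P v"
proof -
  have "\<exists>!B. B \<in> P \<and> v \<in> B" using wfp_ex1 assms by blast
  then show ?thesis unfolding tree_of_def by (rule theI')
qed

lemma tree_of_eq: assumes "wfp n P" "B \<in> P" "v \<in> B" shows "tree_of P v = B"
proof -
  have v: "v \<in> {1..n}" using assms unfolding wfp_def by blast
  have ex: "\<exists>!B. B \<in> P \<and> v \<in> B" by (rule wfp_ex1[OF assms(1) v])
  have "B \<in> P \<and> v \<in> B" using assms by blast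
  then show ?thesis unfolding tree_of_def by (rule the1_equality[OF ex])
qed


lemma merge_wfp:
  assumes "wfp n P" "A \<subseteq> {1..card P}" "card A = 2"
  shows "wfp n (merge P A) \<and> card (merge P A) = card P - 1
     \<and> (\<forall>v\<in>{1..n}. tree_of (merge P A) v = (if tree_of P v \<in> block P ` A then \<Union>(block P ` A) else tree_of P v))"
proof -
  obtain a b where ab: "A = {a, b}" "a \<noteq> b" using assms(3) by (meson card_2_iff)
  have bij: "bij_betw (block P) {1..card P} P" by (rule block_bij[OF assms(1)])
  define B1 where "B1 = block P a"
  define B2 where "B2 = block P b"
  have abin: "a \<in> {1..card P}" "b \<in> {1..card P}" using ab assms(2) by auto
  have B12: "B1 \<in> P" "B2 \<in> P" using bij abin unfolding B1_def B2_def bij_betw_def by auto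
  have "B1 \<noteq> B2" using bij abin ab(2) unfolding B1_def B2_def bij_betw_def inj_on_def by blast
  note B12 = B12 this
  have img: "block P ` A = {B1, B2}" using ab B1_def B2_def by auto
  have fin: "finite P" using assms(1) unfolding wfp_def by blast
  have ne: "\<And>B. B \<in> P \<Longrightarrow> B \<noteq> {}" and dj: "\<And>B C. B \<in> P \<Longrightarrow> C \<in> P \<Longrightarrow> B \<noteq> C \<Longrightarrow> B \<inter> C = {}"
    and un: "\<Union>P = {1..n}" using assms(1) unfolding wfp_def by blast+
  have M: "merge P A = (P - {B1, B2}) \<union> {B1 \<union> B2}" unfolding merge_def img by simp
  have notin: "B1 \<union> B2 \<notin> P - {B1, B2}"
  proof
    assume "B1 \<union> B2 \<in> P - {B1, B2}"
    then have "B1 \<union> B2 \<in> P" "B1 \<union> B2 \<noteq> B1" by auto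
    then have "(B1 \<union> B2) \<inter> B1 = {}" using dj B12 by blast
    then show False using ne B12 by blast
  qed
  have w: "wfp n (merge P A)" unfolding wfp_def M
  proof (intro conjI)
    show "finite (P - {B1, B2} \<union> {B1 \<union> B2})" using fin by simp
    show "\<forall>B\<in>P - {B1, B2} \<union> {B1 \<union> B2}. B \<noteq> {}" using ne B12 by auto
    show "\<forall>B\<in>P - {B1, B2} \<union> {B1 \<union> B2}. \<forall>C\<in>P - {B1, B2} \<union> {B1 \<union> B2}. B \<noteq> C \<longrightarrow> B \<inter> C = {}"
    proof (intro ballI impI)
      fix B C assume B: "B \<in> P - {B1, B2} \<union> {B1 \<union> B2}" and C: "C \<in> P - {B1, B2} \<union> {B1 \<union> B2}"
        and BC: "B \<noteq> C"
      show "B \<inter> C = {}"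
      proof (cases "B = B1 \<union> B2")
        case True
        then have "C \<in> P" "C \<noteq> B1" "C \<noteq> B2" using C BC by auto
        then have "C \<inter> B1 = {}" "C \<inter> B2 = {}" using dj B12 by auto
        then show ?thesis using True by blast
      next
        case F1: False
        show ?thesis
        proof (cases "C = B1 \<union> B2")
          case True
          then have "B \<in> P" "B \<noteq> B1" "B \<noteq> B2" using B F1 by auto
          then have "B \<inter> B1 = {}" "B \<inter> B2 = {}" using dj B12 by auto
          then show ?thesis using True by blast
        next
          case False
          then have "B \<in> P" "C \<in> P" using B C F1 by auto
          then show ?thesis using dj BC by blast
        qed
      qed
    qed
    show "\<Union> (P - {B1, B2} \<union> {B1 \<union> B2}) = {1..n}" using un B12 by auto
  qed
  have "card {B1, B2} \<le> card P" using card_mono[OF fin, of "{B1,B2}"] B12 by auto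
  then have c2: "card P \<ge> 2" using B12 by simp
  have c: "card (merge P A) = card P - 1" unfolding M using notin fin B12 c2
    by (simp add: card_Diff_subset)
  have t: "\<forall>v\<in>{1..n}. tree_of (merge P A) v = (if tree_of P v \<in> block P ` A then \<Union>(block P ` A) else tree_of P v)"
  proof
    fix v assume v: "v \<in> {1..n}"
    have tv: "tree_of P v \<in> P" "v \<in> tree_of P v" using tree_of_prop[OF assms(1) v] by auto
    show "tree_of (merge P A) v = (if tree_of P v \<in> block P ` A then \<Union>(block P ` A) else tree_of P v)"
    proof (cases "tree_of P v \<in> block P ` A")
      case True
      then show ?thesis using tree_of_eq[OF w, of "B1 \<union> B2" v] tv img M by auto
    next
      case False
      then show ?thesis using tree_of_eq[OF w, of "tree_of P v" v] tv img M by auto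
    qed
  qed
  show ?thesis using w c t by blast
qed

definition validc :: "nat \<Rightarrow> nat \<Rightarrow> (nat \<Rightarrow> nat set \<times> bool) \<Rightarrow> bool" where
  "validc n d c \<longleftrightarrow> (\<forall>j. n - d < j \<and> j \<le> n \<longrightarrow> fst (c j) \<subseteq> {1..j} \<and> card (fst (c j)) = 2)"

lemma coal_wfp: "d < n \<Longrightarrow> validc n d c \<Longrightarrow> wfp n (coal n c d) \<and> card (coal n c d) = n - d"
proof (induction d)
  case 0
  have "wfp n ((\<lambda>v. {v}) ` {1..n})" unfolding wfp_def by auto
  moreover have "card ((\<lambda>v. {v}) ` {1..n}) = n" by (simp add: card_image)
  ultimately show ?case by simp
next
  case (Suc d)
  have le: "n - Suc d \<le> n - d" by simp
  have v: "validc n d c" using Suc.prems(2) le unfolding validc_def by (meson le_less_trans)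
  have IH: "wfp n (coal n c d)" "card (coal n c d) = n - d" using Suc.IH[OF _ v] Suc.prems by auto
  have "fst (c (n - d)) \<subseteq> {1..n-d}" "card (fst (c (n - d))) = 2"
    using Suc.prems(2) Suc.prems(1) unfolding validc_def by auto
  then show ?case using merge_wfp[OF IH(1), of "fst (c (n-d))"] IH by auto
qed

lemma coal_dep: "d \<le> n \<Longrightarrow> (\<And>j. n - d < j \<Longrightarrow> j \<le> n \<Longrightarrow> c j = c' j) \<Longrightarrow> coal n c d = coal n c' d"
proof (induction d)
  case 0 then show ?case by simp
next
  case (Suc d)
  have "coal n c d = coal n c' d" using Suc by auto
  moreover have "c (n - d) = c' (n - d)" using Suc.prems by (cases "d < n") auto
  ultimately show ?case by simp
qed


lemma cnt0: assumes "finite S" "T \<subseteq> S"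
  shows "card {A. A \<subseteq> S \<and> card A = 2 \<and> A \<inter> T = {}} = (card S - card T) choose 2"
proof -
  have "{A. A \<subseteq> S \<and> card A = 2 \<and> A \<inter> T = {}} = {A. A \<subseteq> S - T \<and> card A = 2}" by auto
  moreover have "card (S - T) = card S - card T" using assms by (meson card_Diff_subset finite_subset)
  ultimately show ?thesis using n_subsets[of "S - T" 2] assms by simp
qed

lemma cnt1: assumes "finite S" "T \<subseteq> S" "s0 \<in> T"
  shows "card {A. A \<subseteq> S \<and> card A = 2 \<and> A \<inter> T = {s0}} = card S - card T"
proof -
  have eq: "{A. A \<subseteq> S \<and> card A = 2 \<and> A \<inter> T = {s0}} = (\<lambda>x. {s0, x}) ` (S - T)"
  proof (intro equalityI subsetI)
    fix A assume "A \<in> {A. A \<subseteq> S \<and> card A = 2 \<and> A \<inter> T = {s0}}"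
    then have A: "A \<subseteq> S" "card A = 2" "A \<inter> T = {s0}" by auto
    obtain a b where ab: "A = {a, b}" "a \<noteq> b" using A(2) by (meson card_2_iff)
    have "s0 \<in> A" using A(3) by blast
    then show "A \<in> (\<lambda>x. {s0, x}) ` (S - T)"
    proof (cases "s0 = a")
      case True
      then have "b \<notin> T" using A(3) ab by auto
      then show ?thesis using True ab A(1) by auto
    next
      case False
      then have "s0 = b" using \<open>s0 \<in> A\<close> ab by auto
      then have "a \<notin> T" using A(3) ab by auto
      then show ?thesis using \<open>s0 = b\<close> ab A(1) by (auto simp: insert_commute)
    qed
  next
    fix A assume "A \<in> (\<lambda>x. {s0, x}) ` (S - T)"
    then obtain x where x: "x \<in> S" "x \<notin> T" "A = {s0, x}" by auto
    then have "s0 \<noteq> x" using assms(3) by auto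
    then show "A \<in> {A. A \<subseteq> S \<and> card A = 2 \<and> A \<inter> T = {s0}}" using x assms by auto
  qed
  have inj: "inj_on (\<lambda>x. {s0, x}) (S - T)"
  proof
    fix x y assume "x \<in> S - T" "y \<in> S - T" "{s0, x} = {s0, y}"
    then show "x = y" using assms(3) by (metis Diff_iff doubleton_eq_iff)
  qed
  have "card (S - T) = card S - card T" using assms by (meson card_Diff_subset finite_subset)
  then show ?thesis unfolding eq using card_image[OF inj] by simp
qed

definition Fc :: "nat \<Rightarrow> (nat set \<times> bool) set" where
  "Fc m = {A. A \<subseteq> {1..m} \<and> card A = 2} \<times> UNIV"

lemma choices_Fc: "choices n = PiE {2..n} Fc" unfolding choices_def Fc_def by simp

lemma card_Fc: "card (Fc m) = 2 * (m choose 2)"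
  unfolding Fc_def using n_subsets[of "{1..m}" 2] by (simp add: card_cartesian_product)

lemma finite_Fc: "finite (Fc m)"
  unfolding Fc_def by simp

definition condm :: "nat \<Rightarrow> nat \<Rightarrow> (nat \<Rightarrow> nat set) \<Rightarrow> (nat \<Rightarrow> nat set \<times> bool) \<Rightarrow> nat \<Rightarrow> bool" where
  "condm n K J c m \<longleftrightarrow> (\<forall>i\<in>{1..K}. (tree_of (forest n c m) i \<in> block (forest n c m) ` fst (c m) \<longleftrightarrow> m \<in> J i))"

lemma forest_dep: "m \<le> n \<Longrightarrow> (\<And>j. m < j \<Longrightarrow> j \<le> n \<Longrightarrow> c j = c' j) \<Longrightarrow> forest n c m = forest n c' m"
  unfolding forest_def by (rule coal_dep) auto

lemma condm_dep: "m \<le> n \<Longrightarrow> (\<And>j. m \<le> j \<Longrightarrow> j \<le> n \<Longrightarrow> c j = c' j) \<Longrightarrow> condm n K J c m = condm n K J c' m"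
proof -
  assume a: "m \<le> n" "\<And>j. m \<le> j \<Longrightarrow> j \<le> n \<Longrightarrow> c j = c' j"
  have "forest n c m = forest n c' m" using a by (intro forest_dep) auto
  moreover have "c m = c' m" using a by auto
  ultimately show ?thesis unfolding condm_def by simp
qed

lemma not_union_block:
  assumes "wfp n P" "A \<subseteq> {1..card P}" "card A = 2" "B \<in> P" "B \<notin> block P ` A"
  shows "B \<noteq> \<Union>(block P ` A)"
proof
  assume eq: "B = \<Union>(block P ` A)"
  obtain a where a: "a \<in> A" using assms(3) by fastforce
  have "block P a \<in> P" using block_bij[OF assms(1)] a assms(2) unfolding bij_betw_def by auto
  moreover have "block P a \<noteq> B" using assms(5) a by auto
  ultimately have "block P a \<inter> B = {}" "block P a \<noteq> {}" using assms(1,4) unfolding wfp_def by auto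
  moreover have "block P a \<subseteq> B" using eq a by auto
  ultimately show False by auto
qed

locale cset =
  fixes n L K :: nat and J :: "nat \<Rightarrow> nat set"
  assumes K1: "1 \<le> K" and KL: "K \<le> L" and L1: "1 \<le> L" and Ln: "L \<le> n"
    and Jsub: "\<And>i. i \<in> {1..K} \<Longrightarrow> J i \<subseteq> {L+1..n}"
    and Jdisj: "\<And>i j. i \<in> {1..K} \<Longrightarrow> j \<in> {1..K} \<Longrightarrow> i \<noteq> j \<Longrightarrow> J i \<inter> J j = {}"
begin

definition goodd :: "nat \<Rightarrow> (nat \<Rightarrow> nat set \<times> bool) \<Rightarrow> bool" where
  "goodd d c \<longleftrightarrow> (\<forall>m. n - d < m \<and> m \<le> n \<longrightarrow> c m \<in> Fc m \<and> (L < m \<longrightarrow> condm n K J c m))"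

lemma goodd_Suc: "goodd (Suc d) c \<Longrightarrow> goodd d c"
proof -
  assume a: "goodd (Suc d) c"
  have "n - Suc d \<le> n - d" by simp
  then show ?thesis using a unfolding goodd_def by (meson le_less_trans)
qed

lemma goodd_valid: assumes "goodd d c" shows "validc n d c"
  unfolding validc_def
proof (intro allI impI)
  fix j assume "n - d < j \<and> j \<le> n"
  then have "c j \<in> Fc j" using assms unfolding goodd_def by blast
  then show "fst (c j) \<subseteq> {1..j} \<and> card (fst (c j)) = 2" unfolding Fc_def by (auto simp: mem_Times_iff)
qed

lemma inv: "goodd d c \<Longrightarrow> d < n \<Longrightarrow> L \<le> n - d \<Longrightarrow>
   (\<forall>i\<in>{1..K}. \<forall>j\<in>{1..K}. i \<noteq> j \<longrightarrow> tree_of (coal n c d) i \<noteq> tree_of (coal n c d) j)"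
proof (induction d)
  case 0
  have w: "wfp n ((\<lambda>v. {v}) ` {1..n})" unfolding wfp_def by auto
  have "\<And>i. i \<in> {1..K} \<Longrightarrow> tree_of ((\<lambda>v. {v}) ` {1..n}) i = {i}"
    using KL Ln by (intro tree_of_eq[OF w]) auto
  then show ?case by auto
next
  case (Suc d)
  have g: "goodd d c" using goodd_Suc Suc.prems(1) by blast
  have IH: "\<forall>i\<in>{1..K}. \<forall>j\<in>{1..K}. i \<noteq> j \<longrightarrow> tree_of (coal n c d) i \<noteq> tree_of (coal n c d) j"
    using Suc.IH[OF g] Suc.prems by auto
  define m where "m = n - d"
  define P where "P = coal n c d"
  have Lm: "L < m" "m \<le> n" "n - Suc d < m" using Suc.prems unfolding m_def by auto
  have wc: "wfp n P" "card P = m" using coal_wfp[OF _ goodd_valid[OF g]] Suc.prems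
    unfolding P_def m_def by auto
  have cm: "c m \<in> Fc m" "condm n K J c m" using Suc.prems(1) Lm unfolding goodd_def by auto
  have A: "fst (c m) \<subseteq> {1..card P}" "card (fst (c m)) = 2" using cm(1) wc(2) unfolding Fc_def by auto
  have fP: "forest n c m = P" unfolding forest_def P_def m_def using Suc.prems by simp
  have cs: "coal n c (Suc d) = merge P (fst (c m))" unfolding P_def m_def by simp
  note mw = merge_wfp[OF wc(1) A]
  have cond: "\<And>i. i \<in> {1..K} \<Longrightarrow> (tree_of P i \<in> block P ` fst (c m) \<longleftrightarrow> m \<in> J i)"
    using cm(2) fP unfolding condm_def by auto
  show ?case
  proof (intro ballI impI)
    fix i j assume ij: "i \<in> {1..K}" "j \<in> {1..K}" "i \<noteq> j"
    have ijn: "i \<in> {1..n}" "j \<in> {1..n}" using ij KL Ln by auto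
    have neq: "tree_of P i \<noteq> tree_of P j" using IH ij unfolding P_def by auto
    have tP: "tree_of P i \<in> P" "tree_of P j \<in> P" using tree_of_prop[OF wc(1)] ijn by auto
    have nb: "\<not> (tree_of P i \<in> block P ` fst (c m) \<and> tree_of P j \<in> block P ` fst (c m))"
      using cond ij Jdisj by blast
    have ti: "tree_of (merge P (fst (c m))) i = (if tree_of P i \<in> block P ` fst (c m) then \<Union>(block P ` fst (c m)) else tree_of P i)"
      using mw ijn by blast
    have tj: "tree_of (merge P (fst (c m))) j = (if tree_of P j \<in> block P ` fst (c m) then \<Union>(block P ` fst (c m)) else tree_of P j)"
      using mw ijn by blast
    show "tree_of (coal n c (Suc d)) i \<noteq> tree_of (coal n c (Suc d)) j"
      unfolding cs ti tj
    proof (cases "tree_of P i \<in> block P ` fst (c m)")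
      case True
      then have "tree_of P j \<notin> block P ` fst (c m)" using nb by blast
      then show "(if tree_of P i \<in> block P ` fst (c m) then \<Union> (block P ` fst (c m)) else tree_of P i) \<noteq>
         (if tree_of P j \<in> block P ` fst (c m) then \<Union> (block P ` fst (c m)) else tree_of P j)"
        using True not_union_block[OF wc(1) A tP(2)] by simp
    next
      case False
      show "(if tree_of P i \<in> block P ` fst (c m) then \<Union> (block P ` fst (c m)) else tree_of P i) \<noteq>
         (if tree_of P j \<in> block P ` fst (c m) then \<Union> (block P ` fst (c m)) else tree_of P j)"
        using False not_union_block[OF wc(1) A tP(1)] neq by auto
    qed
  qed
qed

definition Nf :: "nat \<Rightarrow> nat" where
  "Nf m = 2 * (if L < m then (if \<exists>i\<in>{1..K}. m \<in> J i then m - K else (m - K) choose 2) else m choose 2)"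

lemma count_step:
  assumes g: "goodd d g" and dn: "d < n"
  shows "card {y \<in> Fc (n - d). L < n - d \<longrightarrow> condm n K J (g(n - d := y)) (n - d)} = Nf (n - d)"
proof -
  define m where "m = n - d"
  show ?thesis
  proof (cases "L < m")
    case False
    then show ?thesis unfolding m_def[symmetric] Nf_def using card_Fc by simp
  next
    case True
    define P where "P = coal n g d"
    have wc: "wfp n P" "card P = m" using coal_wfp[OF dn goodd_valid[OF g]]
      unfolding P_def m_def by auto
    have dist: "\<forall>i\<in>{1..K}. \<forall>j\<in>{1..K}. i \<noteq> j \<longrightarrow> tree_of P i \<noteq> tree_of P j"
      using inv[OF g dn] True unfolding P_def m_def by auto
    have fP: "\<And>y. forest n (g(m := y)) m = P"
    proof -
      fix y
      have "forest n (g(m := y)) m = forest n g m" using dn unfolding m_def by (intro forest_dep) auto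
      then show "forest n (g(m := y)) m = P" unfolding forest_def P_def m_def using dn by simp
    qed
    have bij: "bij_betw (block P) {1..m} P" using block_bij[OF wc(1)] wc(2) by simp
    define t where "t i = inv_into {1..m} (block P) (tree_of P i)" for i
    have Kn: "\<And>i. i \<in> {1..K} \<Longrightarrow> i \<in> {1..n}" using KL Ln by auto
    have tP: "\<And>i. i \<in> {1..K} \<Longrightarrow> tree_of P i \<in> P" using tree_of_prop[OF wc(1)] Kn by blast
    have tm: "\<And>i. i \<in> {1..K} \<Longrightarrow> t i \<in> {1..m} \<and> block P (t i) = tree_of P i"
      unfolding t_def using bij tP by (metis bij_betw_def f_inv_into_f inv_into_into)
    have key: "\<And>A i. A \<subseteq> {1..m} \<Longrightarrow> i \<in> {1..K} \<Longrightarrow> (tree_of P i \<in> block P ` A \<longleftrightarrow> t i \<in> A)"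
    proof -
      fix A i assume A: "A \<subseteq> {1..m}" and i: "i \<in> {1..K}"
      have "inj_on (block P) {1..m}" using bij unfolding bij_betw_def by blast
      then show "tree_of P i \<in> block P ` A \<longleftrightarrow> t i \<in> A"
        using tm[OF i] A by (metis image_eqI inj_on_image_mem_iff)
    qed
    have tinj: "inj_on t {1..K}"
    proof
      fix i j assume "i \<in> {1..K}" "j \<in> {1..K}" "t i = t j"
      then show "i = j" using tm dist by metis
    qed
    define T where "T = t ` {1..K}"
    have T: "T \<subseteq> {1..m}" "card T = K" unfolding T_def using tm card_image[OF tinj] by auto
    have Y: "{y \<in> Fc m. L < m \<longrightarrow> condm n K J (g(m := y)) m} =
          {A. A \<subseteq> {1..m} \<and> card A = 2 \<and> (\<forall>i\<in>{1..K}. t i \<in> A \<longleftrightarrow> m \<in> J i)} \<times> UNIV"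
    proof -
      have "\<And>y. y \<in> Fc m \<Longrightarrow> condm n K J (g(m := y)) m \<longleftrightarrow> (\<forall>i\<in>{1..K}. t i \<in> fst y \<longleftrightarrow> m \<in> J i)"
      proof -
        fix y assume "y \<in> Fc m"
        then have fy: "fst y \<subseteq> {1..m}" unfolding Fc_def by (auto simp: mem_Times_iff)
        show "condm n K J (g(m := y)) m \<longleftrightarrow> (\<forall>i\<in>{1..K}. t i \<in> fst y \<longleftrightarrow> m \<in> J i)"
          unfolding condm_def fP fun_upd_same by (simp add: key[OF fy])
      qed
      then show ?thesis using True unfolding Fc_def by auto
    qed
    have cY: "card {A. A \<subseteq> {1..m} \<and> card A = 2 \<and> (\<forall>i\<in>{1..K}. t i \<in> A \<longleftrightarrow> m \<in> J i)}
       = (if \<exists>i\<in>{1..K}. m \<in> J i then m - K else (m - K) choose 2)"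
    proof (cases "\<exists>i\<in>{1..K}. m \<in> J i")
      case True
      then obtain i0 where i0: "i0 \<in> {1..K}" "m \<in> J i0" by blast
      have mj: "\<And>i. i \<in> {1..K} \<Longrightarrow> m \<in> J i \<longleftrightarrow> i = i0" using Jdisj i0 by blast
      have e1: "\<And>A. (\<forall>i\<in>{1..K}. t i \<in> A \<longleftrightarrow> m \<in> J i) \<longleftrightarrow> (\<forall>i\<in>{1..K}. t i \<in> A \<longleftrightarrow> i = i0)"
        using mj by (intro ball_cong) auto
      have e2: "(\<forall>i\<in>{1..K}. t i \<in> A \<longleftrightarrow> i = i0) \<longleftrightarrow> A \<inter> T = {t i0}" for A
      proof
        assume h: "\<forall>i\<in>{1..K}. t i \<in> A \<longleftrightarrow> i = i0"
        show "A \<inter> T = {t i0}"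
        proof
          show "A \<inter> T \<subseteq> {t i0}" unfolding T_def using h by auto
          show "{t i0} \<subseteq> A \<inter> T" unfolding T_def using h i0(1) by auto
        qed
      next
        assume h: "A \<inter> T = {t i0}"
        show "\<forall>i\<in>{1..K}. t i \<in> A \<longleftrightarrow> i = i0"
        proof (intro ballI iffI)
          fix i assume i: "i \<in> {1..K}" "t i \<in> A"
          then have "t i \<in> A \<inter> T" unfolding T_def by auto
          then have "t i = t i0" using h by auto
          then show "i = i0" using tinj i i0(1) by (meson inj_onD)
        next
          fix i assume "i \<in> {1..K}" "i = i0"
          then show "t i \<in> A" using h by auto
        qed
      qed
      have "\<And>A. (\<forall>i\<in>{1..K}. t i \<in> A \<longleftrightarrow> m \<in> J i) \<longleftrightarrow> A \<inter> T = {t i0}"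
        using e1 e2 by simp
      then have "{A. A \<subseteq> {1..m} \<and> card A = 2 \<and> (\<forall>i\<in>{1..K}. t i \<in> A \<longleftrightarrow> m \<in> J i)}
          = {A. A \<subseteq> {1..m} \<and> card A = 2 \<and> A \<inter> T = {t i0}}" by auto
      moreover have "t i0 \<in> T" unfolding T_def using i0 by auto
      ultimately show ?thesis using cnt1[of "{1..m}" T "t i0"] T True by simp
    next
      case False
      then have "\<And>A. (\<forall>i\<in>{1..K}. t i \<in> A \<longleftrightarrow> m \<in> J i) \<longleftrightarrow> A \<inter> T = {}"
        unfolding T_def by auto
      then have "{A. A \<subseteq> {1..m} \<and> card A = 2 \<and> (\<forall>i\<in>{1..K}. t i \<in> A \<longleftrightarrow> m \<in> J i)}
          = {A. A \<subseteq> {1..m} \<and> card A = 2 \<and> A \<inter> T = {}}" by auto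
      then show ?thesis using cnt0[of "{1..m}" T] T False by simp
    qed
    show ?thesis unfolding m_def[symmetric] Y Nf_def using True cY
      by (simp add: card_cartesian_product)
  qed
qed

end


context cset begin

definition Ed :: "nat \<Rightarrow> (nat \<Rightarrow> nat set \<times> bool) set" where
  "Ed d = {c \<in> PiE {n-d+1..n} Fc. \<forall>m\<in>{n-d+1..n}. L < m \<longrightarrow> condm n K J c m}"

lemma Ed_good: assumes "c \<in> Ed d" shows "goodd d c"
  unfolding goodd_def
proof (intro allI impI)
  fix m assume m: "n - d < m \<and> m \<le> n"
  then have "m \<in> {n-d+1..n}" by auto
  then show "c m \<in> Fc m \<and> (L < m \<longrightarrow> condm n K J c m)" using assms unfolding Ed_def by (auto simp: PiE_iff)
qed

lemma Ed_fin: "finite (Ed d)"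
proof -
  have "Ed d \<subseteq> PiE {n-d+1..n} Fc" unfolding Ed_def by blast
  moreover have "finite (PiE {n-d+1..n} Fc)" by (intro finite_PiE) (auto simp: finite_Fc)
  ultimately show ?thesis by (rule finite_subset)
qed

lemma Ed_step: assumes dn: "Suc d < n" shows "card (Ed (Suc d)) = Nf (n - d) * card (Ed d)"
proof -
  define m where "m = n - d"
  define I where "I = {n-d+1..n}"
  have I': "{n - Suc d + 1..n} = insert m I" unfolding m_def I_def using dn by auto
  have mI: "m \<notin> I" unfolding m_def I_def by auto
  have mn: "m \<le> n" unfolding m_def by auto
  define Y where "Y g = {y \<in> Fc m. L < m \<longrightarrow> condm n K J (g(m := y)) m}" for g
  have EdI: "Ed d = {c \<in> PiE I Fc. \<forall>m'\<in>I. L < m' \<longrightarrow> condm n K J c m'}" unfolding Ed_def I_def ..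
  have EdS: "Ed (Suc d) = {c \<in> PiE (insert m I) Fc. \<forall>m'\<in>insert m I. L < m' \<longrightarrow> condm n K J c m'}"
    unfolding Ed_def I' ..
  have Igt: "\<And>j. j \<in> I \<Longrightarrow> m < j \<and> j \<le> n" unfolding I_def m_def by auto
  have eq: "Ed (Suc d) = (\<lambda>(g, y). g(m := y)) ` (SIGMA g:Ed d. Y g)"
  proof (intro equalityI subsetI)
    fix c assume c: "c \<in> Ed (Suc d)"
    define g where "g = c(m := undefined)"
    have cP: "c \<in> PiE (insert m I) Fc" and cc: "\<And>m'. m' \<in> insert m I \<Longrightarrow> L < m' \<Longrightarrow> condm n K J c m'"
      using c unfolding EdS by auto
    have gP: "g \<in> PiE I Fc" using cP mI unfolding g_def by (auto simp: PiE_iff extensional_def)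
    have gc: "\<And>m'. m' \<in> I \<Longrightarrow> condm n K J g m' = condm n K J c m'"
    proof -
      fix m' assume "m' \<in> I"
      then have mm: "m < m'" "m' \<le> n" using Igt by auto
      show "condm n K J g m' = condm n K J c m'"
        by (rule condm_dep[OF mm(2)]) (use mm in \<open>auto simp: g_def\<close>)
    qed
    have g: "g \<in> Ed d" unfolding EdI using gP gc cc by auto
    have cg: "c = g(m := c m)" unfolding g_def by simp
    have y: "c m \<in> Y g" unfolding Y_def using cP cc cg[symmetric] by (auto simp: PiE_iff)
    show "c \<in> (\<lambda>(g, y). g(m := y)) ` (SIGMA g:Ed d. Y g)"
      using g y cg by (intro image_eqI[of _ _ "(g, c m)"]) auto
  next
    fix c assume "c \<in> (\<lambda>(g, y). g(m := y)) ` (SIGMA g:Ed d. Y g)"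
    then obtain g y where g: "g \<in> Ed d" and y: "y \<in> Y g" and c: "c = g(m := y)" by auto
    have gP: "g \<in> PiE I Fc" and gc: "\<And>m'. m' \<in> I \<Longrightarrow> L < m' \<Longrightarrow> condm n K J g m'"
      using g unfolding EdI by auto
    have yF: "y \<in> Fc m" and yc: "L < m \<Longrightarrow> condm n K J c m" using y c unfolding Y_def by auto
    have cP: "c \<in> PiE (insert m I) Fc" using gP yF mI unfolding c by (auto simp: PiE_iff extensional_def)
    have cc: "\<And>m'. m' \<in> I \<Longrightarrow> condm n K J c m' = condm n K J g m'"
    proof -
      fix m' assume "m' \<in> I"
      then have mm: "m < m'" "m' \<le> n" using Igt by auto
      show "condm n K J c m' = condm n K J g m'"
        by (rule condm_dep[OF mm(2)]) (use mm in \<open>auto simp: c\<close>)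
    qed
    show "c \<in> Ed (Suc d)" unfolding EdS using cP cc gc yc by auto
  qed
  have inj: "inj_on (\<lambda>(g, y). g(m := y)) (SIGMA g:Ed d. Y g)"
  proof (rule inj_onI, clarify)
    fix g y g' y' assume g: "g \<in> Ed d" "g' \<in> Ed d" and e: "g(m := y) = g'(m := y')"
    have "g m = undefined" "g' m = undefined" using g mI unfolding EdI by (auto simp: PiE_iff extensional_def)
    then have "g = g'" using e by (metis fun_upd_triv fun_upd_upd)
    moreover have "y = y'" using e by (metis fun_upd_same)
    ultimately show "g = g' \<and> y = y'" by simp
  qed
  have fY: "\<And>g. finite (Y g)" unfolding Y_def using finite_Fc by auto
  have cardY: "\<And>g. g \<in> Ed d \<Longrightarrow> card (Y g) = Nf m"
    unfolding Y_def m_def using count_step Ed_good dn by simp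
  have "card (Ed (Suc d)) = card (SIGMA g:Ed d. Y g)" unfolding eq using card_image[OF inj] .
  also have "\<dots> = (\<Sum>g\<in>Ed d. card (Y g))" using Ed_fin fY by (simp add: card_SigmaI)
  also have "\<dots> = Nf m * card (Ed d)" using cardY by simp
  finally show ?thesis unfolding m_def .
qed

lemma Ed_card: "d < n \<Longrightarrow> card (Ed d) = (\<Prod>j\<in>{n-d+1..n}. Nf j)"
proof (induction d)
  case 0
  have "Ed 0 = {\<lambda>_. undefined}" unfolding Ed_def by auto
  then show ?case by simp
next
  case (Suc d)
  have "{n - Suc d + 1..n} = insert (n - d) {n-d+1..n}" using Suc.prems by auto
  moreover have "n - d \<notin> {n-d+1..n}" by auto
  ultimately have "(\<Prod>j\<in>{n - Suc d + 1..n}. Nf j) = Nf (n - d) * (\<Prod>j\<in>{n-d+1..n}. Nf j)" by simp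
  then show ?case using Ed_step[OF Suc.prems] Suc by simp
qed

lemma event_eq: "choices n \<inter> {c. \<forall>i\<in>{1..K}. Sset n c i - {1..L} = J i} = Ed (n - 1)"
proof -
  have I: "{n - (n - 1) + 1..n} = {2..n}" using Ln L1 by auto
  have S: "\<And>c i. Sset n c i - {1..L} = {m \<in> {L+1..n}. tree_of (forest n c m) i \<in> block (forest n c m) ` fst (c m)}"
    unfolding Sset_def using L1 by auto
  have gen: "\<And>B S P. B \<subseteq> S \<Longrightarrow> ({x\<in>S. P x} = B \<longleftrightarrow> (\<forall>x\<in>S. P x \<longleftrightarrow> x \<in> B))" by blast
  have "\<And>c. (\<forall>i\<in>{1..K}. Sset n c i - {1..L} = J i) \<longleftrightarrow>
     (\<forall>i\<in>{1..K}. \<forall>m\<in>{L+1..n}. (tree_of (forest n c m) i \<in> block (forest n c m) ` fst (c m) \<longleftrightarrow> m \<in> J i))"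
  proof (intro ball_cong refl)
    fix c i assume i: "i \<in> {1..K}"
    show "(Sset n c i - {1..L} = J i) \<longleftrightarrow> (\<forall>m\<in>{L+1..n}. (tree_of (forest n c m) i \<in> block (forest n c m) ` fst (c m) \<longleftrightarrow> m \<in> J i))"
      unfolding S by (rule gen[OF Jsub[OF i]])
  qed
  also have "\<And>c. \<dots>c \<longleftrightarrow> (\<forall>m\<in>{2..n}. L < m \<longrightarrow> condm n K J c m)"
  proof -
    have sw: "\<And>Q. (\<forall>i\<in>{1..K}. \<forall>m\<in>{L+1..n}. Q i m) \<longleftrightarrow> (\<forall>m\<in>{2..n}. L < m \<longrightarrow> (\<forall>i\<in>{1..K}. Q i m))"
      using L1 by auto
    fix c show "?thesis c" unfolding condm_def by (rule sw)
  qed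
  finally show ?thesis unfolding Ed_def I choices_Fc by auto
qed

lemma prob_formula:
  "measure_pmf.prob (coal_pmf n) {c. \<forall>i\<in>{1..K}. Sset n c i - {1..L} = J i}
     = (\<Prod>m\<in>{L+1..n}. real (Nf m) / real (2 * (m choose 2)))"
proof -
  have n2: "1 \<le> n" using K1 KL Ln by simp
  have fin: "finite (choices n)" unfolding choices_Fc by (intro finite_PiE) (auto simp: finite_Fc)
  have ne: "choices n \<noteq> {}" unfolding choices_Fc
  proof -
    have "\<forall>m\<in>{2..n}. Fc m \<noteq> {}"
    proof
      fix m :: nat assume "m \<in> {2..n}"
      then have "({1,2}, True) \<in> Fc m" unfolding Fc_def by auto
      then show "Fc m \<noteq> {}" by auto
    qed
    then show "PiE {2..n} Fc \<noteq> {}" by (simp add: PiE_eq_empty_iff)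
  qed
  have cc: "card (choices n) = (\<Prod>m\<in>{2..n}. 2 * (m choose 2))"
    unfolding choices_Fc by (simp add: card_PiE card_Fc)
  have ce: "card (Ed (n - 1)) = (\<Prod>m\<in>{2..n}. Nf m)"
    using Ed_card[of "n - 1"] n2 by (simp add: numeral_2_eq_2)
  have "measure_pmf.prob (coal_pmf n) {c. \<forall>i\<in>{1..K}. Sset n c i - {1..L} = J i}
     = real (card (Ed (n - 1))) / real (card (choices n))"
    unfolding coal_pmf_def using measure_pmf_of_set[OF ne fin] event_eq by simp
  also have "\<dots> = (\<Prod>m\<in>{2..n}. real (Nf m) / real (2 * (m choose 2)))"
    unfolding ce cc by (simp add: prod_dividef)
  also have "\<dots> = (\<Prod>m\<in>{L+1..n}. real (Nf m) / real (2 * (m choose 2)))"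
  proof (rule prod.mono_neutral_right)
    show "finite {2..n}" by simp
    show "{L+1..n} \<subseteq> {2..n}" using L1 by auto
    show "\<forall>i\<in>{2..n} - {L+1..n}. real (Nf i) / real (2 * (i choose 2)) = 1"
    proof
      fix i assume i: "i \<in> {2..n} - {L+1..n}"
      then have "\<not> L < i" "0 < i choose 2" using Ln by auto
      then show "real (Nf i) / real (2 * (i choose 2)) = 1" unfolding Nf_def by simp
    qed
  qed
  finally show ?thesis .
qed

end


lemma one_minus_ge_exp: fixes y :: real assumes "0 \<le> y" "y \<le> 1/2" shows "exp (-2*y) \<le> 1 - y"
proof -
  have e: "1 + 2*y \<le> exp (2*y)" using exp_ge_add_one_self[of "2*y"] by simp
  have "exp (-2*y) = 1 / exp (2*y)" by (simp add: exp_minus field_simps)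
  also have "\<dots> \<le> 1 / (1 + 2*y)" using e assms by (intro divide_left_mono) auto
  also have "\<dots> \<le> 1 - y"
  proof -
    have "0 \<le> y*(1-2*y)" using assms by simp
    then have "1 \<le> (1 - y) * (1 + 2*y)" by (simp add: algebra_simps)
    then show ?thesis using assms by (simp add: field_simps)
  qed
  finally show ?thesis .
qed

lemma bern_up: fixes a :: real assumes "0 \<le> a" "a \<le> 1"
  shows "(1-a)^k \<le> 1 - real k*a + real k*(real k - 1)/2*a^2"
proof (induction k)
  case 0 then show ?case by simp
next
  case (Suc k)
  have "(1-a)^Suc k = (1-a)*(1-a)^k" by simp
  also have "\<dots> \<le> (1-a)*(1 - real k*a + real k*(real k - 1)/2*a^2)"
    using Suc.IH assms by (intro mult_left_mono) auto
  also have "\<dots> = 1 - real (Suc k)*a + real (Suc k)*(real (Suc k) - 1)/2*a^2 - real k*(real k - 1)/2*a^3"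
    unfolding power2_eq_square power3_eq_cube of_nat_Suc by (simp add: field_simps)
  also have "\<dots> \<le> 1 - real (Suc k)*a + real (Suc k)*(real (Suc k) - 1)/2*a^2"
  proof -
    have "0 \<le> real k*(real k - 1)/2*a^3" using assms by (cases k) auto
    then show ?thesis by linarith
  qed
  finally show ?case .
qed

lemma bern_low: fixes a :: real assumes "0 \<le> a" "a \<le> 1"
  shows "1 - real k*a \<le> (1-a)^k"
  using Bernoulli_inequality[of "-a" k] assms by simp


lemma termJ: fixes x :: real and k :: nat assumes k1: "1 \<le> k" and xk: "4 * real k \<le> x"
  shows "exp (-(4*real k/x)) * ((2/x)*((x-2)/x)^(k-1)) \<le> 2*(x-k)/(x*(x-1))"
    and "2*(x-k)/(x*(x-1)) \<le> exp (4*real k/x) * ((2/x)*((x-2)/x)^(k-1))"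
proof -
  have x4: "4 \<le> x" using k1 xk by (smt (verit) of_nat_1 of_nat_mono)
  have xp: "0 < x" using x4 by simp
  define q where "q = ((x-2)/x)^(k-1)"
  have a: "(x-2)/x = 1 - 2/x" using xp by (simp add: field_simps)
  have a0: "0 \<le> 2/x" "2/x \<le> 1" using x4 by auto
  have q1: "q \<le> 1" unfolding q_def using x4 by (intro power_le_one) auto
  have q0: "0 \<le> q" unfolding q_def using x4 by simp
  have "1 - real (k-1) * (2/x) \<le> q" unfolding q_def a by (rule bern_low[OF a0])
  moreover have "real (k-1) * (2/x) \<le> 2*real k/x" using k1 xp by (simp add: of_nat_diff divide_right_mono)
  ultimately have qlow: "1 - 2*real k/x \<le> q" by linarith
  have y: "0 \<le> 2*real k/x" "2*real k/x \<le> 1/2" using xk xp by (auto simp: field_simps)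
  have "exp (-(4*real k/x)) = exp (-2*(2*real k/x))" by simp
  also have "\<dots> \<le> 1 - 2*real k/x" by (rule one_minus_ge_exp[OF y])
  finally have e1: "exp (-(4*real k/x)) \<le> q" using qlow by linarith
  have g0: "2*(x-k)/(x*(x-1)) \<le> 2/x"
  proof -
    have "x - k \<le> x - 1" using k1 by simp
    then have "2*(x-k)/(x*(x-1)) \<le> 2*(x-1)/(x*(x-1))" using x4 by (intro divide_right_mono) auto
    also have "\<dots> = 2/x" using x4 by (simp add: field_simps)
    finally show ?thesis .
  qed
  have "2/x = exp (4*real k/x) * (exp (-(4*real k/x)) * (2/x))" by (simp add: exp_minus field_simps)
  also have "\<dots> \<le> exp (4*real k/x) * (q * (2/x))" using e1 a0 by (intro mult_left_mono mult_right_mono) auto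
  finally show "2*(x-k)/(x*(x-1)) \<le> exp (4*real k/x) * ((2/x)*((x-2)/x)^(k-1))"
    using g0 unfolding q_def by (simp add: mult.commute)
  have y2: "0 \<le> real k/x" "real k/x \<le> 1/2" using xk xp by (auto simp: field_simps)
  have "2*real k/x \<le> 4*real k/x" using xp by (intro divide_right_mono) auto
  then have "exp (-(4*real k/x)) \<le> exp (-2*(real k/x))" by simp
  also have "\<dots> \<le> 1 - real k/x" by (rule one_minus_ge_exp[OF y2])
  finally have e2: "exp (-(4*real k/x)) \<le> 1 - real k/x" .
  have h2: "(2/x)*q \<le> 2/x" using mult_left_mono[OF q1 a0(1)] by simp
  have "exp (-(4*real k/x)) * ((2/x)*q) \<le> exp (-(4*real k/x)) * (2/x)" using h2 by (intro mult_left_mono) auto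
  also have "\<dots> \<le> (1 - real k/x) * (2/x)" using e2 a0 by (intro mult_right_mono) auto
  also have "\<dots> = 2*(x-k)/(x*x)" using xp by (simp add: field_simps)
  also have "\<dots> \<le> 2*(x-k)/(x*(x-1))"
  proof -
    have "0 \<le> 2*(x-k)" using xk by simp
    moreover have "0 < x*(x-1)" "x*(x-1) \<le> x*x" using x4 by auto
    ultimately show ?thesis by (intro divide_left_mono) auto
  qed
  finally show "exp (-(4*real k/x)) * ((2/x)*((x-2)/x)^(k-1)) \<le> 2*(x-k)/(x*(x-1))" unfolding q_def .
qed

lemma termN: fixes x :: real and k :: nat assumes k1: "1 \<le> k" and xk: "4 * real k \<le> x"
  shows "exp (-(8*real k^2/x^2)) * ((x-2)/x)^k \<le> (x-k)*(x-k-1)/(x*(x-1))"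
    and "(x-k)*(x-k-1)/(x*(x-1)) \<le> exp (8*real k^2/x^2) * ((x-2)/x)^k"
proof -
  have x4: "4 \<le> x" using k1 xk by (smt (verit) of_nat_1 of_nat_mono)
  have xp: "0 < x" using x4 by simp
  define B where "B = ((x-2)/x)^k"
  define A where "A = (x-k)*(x-k-1)/(x*(x-1))"
  define D where "D = real k*(real k - 1)/(x*(x-1))"
  have a: "(x-2)/x = 1 - 2/x" using xp by (simp add: field_simps)
  have a0: "0 \<le> 2/x" "2/x \<le> 1" using x4 by auto
  have Blow: "1 - 2*real k/x \<le> B" unfolding B_def a using bern_low[OF a0, of k] by (simp add: mult.commute)
  have Bup: "B \<le> 1 - 2*real k/x + 2*real k*(real k-1)/x^2"
  proof -
    have e: "real k*(real k - 1)/2*(2/x)^2 = 2*real k*(real k-1)/x^2" using xp by (simp add: power2_eq_square field_simps)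
    have e2: "real k*(2/x) = 2*real k/x" by simp
    have "B \<le> 1 - real k*(2/x) + real k*(real k - 1)/2*(2/x)^2" unfolding B_def a by (rule bern_up[OF a0])
    then show ?thesis unfolding e e2 .
  qed
  have AD: "A = 1 - 2*real k/x + D" unfolding A_def D_def using x4
    by (simp add: field_simps)
  have D0: "0 \<le> D" unfolding D_def using k1 x4 by simp
  have D1: "D \<le> 2*real k*(real k-1)/x^2"
  proof -
    have "0 \<le> real k*(real k - 1)" using k1 by simp
    moreover have "x^2/2 \<le> x*(x-1)" using x4 by (simp add: power2_eq_square field_simps)
    moreover have "0 < x^2/2" using xp by simp
    moreover have "0 < x*(x-1)" using x4 by simp
    ultimately have ineq: "real k*(real k - 1)/(x*(x-1)) \<le> real k*(real k - 1)/(x^2/2)"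
      by (intro divide_left_mono) auto
    have eq: "real k*(real k - 1)/(x^2/2) = 2*real k*(real k-1)/x^2" by simp
    show ?thesis unfolding D_def using ineq unfolding eq .
  qed
  have kk: "2*real k*(real k-1)/x^2 \<le> 2*real k^2/x^2" using k1 by (intro divide_right_mono) (auto simp: power2_eq_square)
  have up1: "A - B \<le> 2*real k^2/x^2" using AD Blow D1 kk by linarith
  have lo1: "A - B \<ge> -(2*real k^2/x^2)" using AD Bup D0 kk by linarith
  have "2*real k/x \<le> 1/2" using xk xp by (auto simp: field_simps)
  then have Bh: "1/2 \<le> B" using Blow by linarith
  have z: "0 \<le> 4*real k^2/x^2" "4*real k^2/x^2 \<le> 1/4"
  proof -
    show "0 \<le> 4*real k^2/x^2" by simp
    have "(4*real k)^2 \<le> x^2" using xk by (intro power_mono) auto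
    then have "16*k^2 \<le> x^2" by (simp add: power_mult_distrib)
    then show "4*real k^2/x^2 \<le> 1/4" using xp by (simp add: field_simps)
  qed
  have "2*real k^2/x^2 = (1/2)*(4*real k^2/x^2)" by simp
  also have "\<dots> \<le> B * (4*real k^2/x^2)" using Bh z by (intro mult_right_mono) auto
  finally have kb: "2*real k^2/x^2 \<le> B * (4*real k^2/x^2)" .
  have "A \<le> B * (1 + 4*real k^2/x^2)" using up1 kb by (simp add: algebra_simps)
  also have "\<dots> \<le> B * exp (4*real k^2/x^2)" using Bh by (intro mult_left_mono) auto
  also have "\<dots> \<le> B * exp (8*real k^2/x^2)"
  proof -
    have "4*real k^2/x^2 \<le> 8*real k^2/x^2" by (intro divide_right_mono) auto
    then show ?thesis using Bh by (intro mult_left_mono) auto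
  qed
  finally show "(x-k)*(x-k-1)/(x*(x-1)) \<le> exp (8*real k^2/x^2) * ((x-2)/x)^k"
    unfolding A_def B_def by (simp add: mult.commute)
  have "exp (-(8*real k^2/x^2)) = exp (-2*(4*real k^2/x^2))" by simp
  also have "\<dots> \<le> 1 - 4*real k^2/x^2" by (rule one_minus_ge_exp) (use z in auto)
  finally have "B * exp (-(8*real k^2/x^2)) \<le> B * (1 - 4*real k^2/x^2)" using Bh by (intro mult_left_mono) auto
  also have "\<dots> \<le> A" using lo1 kb by (simp add: algebra_simps)
  finally show "exp (-(8*real k^2/x^2)) * ((x-2)/x)^k \<le> (x-k)*(x-k-1)/(x*(x-1))"
    unfolding A_def B_def by (simp add: mult.commute)
qed


definition gfun :: "nat \<Rightarrow> (nat \<Rightarrow> nat set) \<Rightarrow> nat \<Rightarrow> real" where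
  "gfun K J m = (if \<exists>i\<in>{1..K}. m \<in> J i then real (m - K) else real ((m - K) choose 2)) / real (m choose 2)"

lemma prob_gfun: assumes "cset n L K J"
  shows "measure_pmf.prob (coal_pmf n) {c. \<forall>i\<in>{1..K}. Sset n c i - {1..L} = J i}
     = (\<Prod>m\<in>{L+1..n}. gfun K J m)"
proof -
  have "\<And>m. m \<in> {L+1..n} \<Longrightarrow> real (cset.Nf L K J m) / real (2 * (m choose 2)) = gfun K J m"
    unfolding cset.Nf_def[OF assms] gfun_def by auto
  then show ?thesis using cset.prob_formula[OF assms] by simp
qed

lemma real_choose2: "real (m choose 2) = real m * (real m - 1) / 2"
proof (induction m)
  case 0 then show ?case by simp
next
  case (Suc m)
  have e: "Suc m choose 2 = (m choose 1) + (m choose 2)" by (metis Suc_1 binomial_Suc_Suc)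
  have "real (Suc m choose 2) = real m + real (m choose 2)" unfolding e by simp
  then show ?case unfolding Suc.IH by (simp add: field_simps)
qed

lemma tele: assumes "1 \<le> L" "L \<le> n" shows "(\<Sum>m\<in>{L+1..n}. 1 / (real m)^2) \<le> 1 / real L - 1 / real n"
  using assms(2)
proof (induction n rule: dec_induct)
  case base then show ?case by simp
next
  case (step n)
  have "{L+1..Suc n} = insert (Suc n) {L+1..n}" using step by auto
  then have "(\<Sum>m\<in>{L+1..Suc n}. 1 / (real m)^2) = 1 / (real (Suc n))^2 + (\<Sum>m\<in>{L+1..n}. 1 / (real m)^2)"
    by simp
  also have "\<dots> \<le> 1 / (real (Suc n))^2 + (1 / real L - 1 / real n)" using step by simp
  also have "\<dots> \<le> 1 / real L - 1 / real (Suc n)"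
  proof -
    have n1: "1 \<le> real n" using step assms by simp
    have "1 / (real (Suc n))^2 \<le> 1 / (real n * real (Suc n))"
      using n1 by (intro divide_left_mono) (auto simp: power2_eq_square)
    moreover have "1 / real n - 1 / real (Suc n) = 1 / (real n * real (Suc n))"
      using n1 by (simp add: field_simps)
    ultimately have "1 / (real (Suc n))^2 \<le> 1 / real n - 1 / real (Suc n)" by simp
    then show ?thesis by linarith
  qed
  finally show ?case .
qed

lemma gfun_J: assumes "i0 \<in> {1..K}" "m \<in> J i0" "K \<le> m" "2 \<le> m"
  shows "gfun K J m = 2 * (real m - real K) / (real m * (real m - 1))"
  using assms unfolding gfun_def real_choose2 by (auto simp: of_nat_diff field_simps)

lemma gfun_N: assumes "\<not> (\<exists>i\<in>{1..K}. m \<in> J i)" "K \<le> m" "2 \<le> m"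
  shows "gfun K J m = (real m - real K) * (real m - real K - 1) / (real m * (real m - 1))"
proof -
  have m: "real m - 1 \<noteq> 0" "real m \<noteq> 0" using assms by auto
  show ?thesis using assms m unfolding gfun_def real_choose2 by (auto simp: of_nat_diff field_simps)
qed

lemma gfun1: assumes "2 \<le> m"
  shows "gfun 1 (\<lambda>_. A) m = (if m \<in> A then 2 / real m else (real m - 2) / real m)"
proof -
  have m: "real m - 1 \<noteq> 0" "real m \<noteq> 0" using assms by auto
  show ?thesis using assms m unfolding gfun_def real_choose2 by (auto simp: of_nat_diff field_simps)
qed


lemma h_J: assumes "i0 \<in> {1..k}" "m \<in> J i0" "\<And>i. i \<in> {1..k} \<Longrightarrow> i \<noteq> i0 \<Longrightarrow> m \<notin> J i" "2 \<le> m"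
  shows "(\<Prod>i\<in>{1..k}. gfun 1 (\<lambda>_. J i) m) = (2 / real m) * ((real m - 2) / real m)^(k-1)"
proof -
  have "(\<Prod>i\<in>{1..k}. gfun 1 (\<lambda>_. J i) m) = gfun 1 (\<lambda>_. J i0) m * (\<Prod>i\<in>{1..k}-{i0}. gfun 1 (\<lambda>_. J i) m)"
    using assms(1) by (simp add: prod.remove)
  also have "(\<Prod>i\<in>{1..k}-{i0}. gfun 1 (\<lambda>_. J i) m) = (\<Prod>i\<in>{1..k}-{i0}. (real m - 2) / real m)"
  proof (rule prod.cong[OF refl])
    fix i assume "i \<in> {1..k}-{i0}"
    then have "m \<notin> J i" using assms(3) by auto
    then show "gfun 1 (\<lambda>_. J i) m = (real m - 2) / real m" using gfun1[OF assms(4), of "J i"] by simp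
  qed
  also have "\<dots> = ((real m - 2) / real m)^(k-1)" using assms(1) by simp
  finally show ?thesis using assms(2) gfun1[OF assms(4), of "J i0"] by simp
qed

lemma h_N: assumes "\<not> (\<exists>i\<in>{1..k}. m \<in> J i)" "2 \<le> m"
  shows "(\<Prod>i\<in>{1..k}. gfun 1 (\<lambda>_. J i) m) = ((real m - 2) / real m)^k"
proof -
  have "(\<Prod>i\<in>{1..k}. gfun 1 (\<lambda>_. J i) m) = (\<Prod>i\<in>{1..k}. (real m - 2) / real m)"
  proof (rule prod.cong[OF refl])
    fix i assume "i \<in> {1..k}"
    then have "m \<notin> J i" using assms(1) by auto
    then show "gfun 1 (\<lambda>_. J i) m = (real m - 2) / real m" using gfun1[OF assms(2), of "J i"] by simp
  qed
  then show ?thesis by simp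
qed

lemma gfun_nonneg: "0 \<le> gfun K J m" unfolding gfun_def by simp

lemma main_bound:
  fixes k n :: nat and \<delta> \<epsilon> :: real and J :: "nat \<Rightarrow> nat set"
  assumes k2: "k \<ge> 2" and d0: "0 < \<delta>" and d2: "\<delta> < 2" and e0: "0 < \<epsilon>"
    and n1: "1 \<le> n"
    and TC: "2 + 4*real k + 24*real k^2/ln (1+\<epsilon>) \<le> ln (real n)"
    and Tn: "ln (real n)^2 \<le> real n"
    and JB: "J \<in> Bset n k \<delta>"
  shows "\<bar>PS n k J - PR n k J\<bar> \<le> \<epsilon> * PR n k J"
proof -
  define \<eta> where "\<eta> = ln (1+\<epsilon>)"
  have \<eta>: "0 < \<eta>" unfolding \<eta>_def using e0 by simp
  define T where "T = ln (real n)"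
  define L where "L = Lcut n"
  have kp: "0 < real k" using k2 by simp
  have T2: "2 \<le> T" and T4: "4*real k + 2 \<le> T" and Teta: "24*real k^2/\<eta> \<le> T"
  proof -
    have "0 \<le> 24*real k^2/\<eta>" using \<eta> by simp
    then show "2 \<le> T" "4*real k + 2 \<le> T" "24*real k^2/\<eta> \<le> T"
      using TC kp unfolding T_def \<eta>_def[symmetric] by linarith+
  qed
  have TT: "T \<le> T^2" using T2 by (simp add: power2_eq_square)
  have LT: "real L \<le> T^2" "T^2 - 1 < real L"
  proof -
    have fl: "0 \<le> \<lfloor>T^2\<rfloor>" by simp
    have "real L = real_of_int \<lfloor>T^2\<rfloor>" unfolding L_def Lcut_def T_def using fl by simp
    then show "real L \<le> T^2" "T^2 - 1 < real L" by linarith+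
  qed
  have LT2: "T \<le> real L"
  proof -
    have "T * (T - 1) \<ge> 2 * 1" using T2 by (intro mult_mono) auto
    then show ?thesis using LT(2) by (simp add: algebra_simps power2_eq_square)
  qed
  have L4: "4 * k \<le> L" using LT2 T4 by linarith
  have L1: "1 \<le> L" using L4 k2 by simp
  have Ln: "L \<le> n" using LT(1) Tn unfolding T_def by simp
  have JBs: "\<And>i. i \<in> {1..k} \<Longrightarrow> J i \<subseteq> {L+1..n}"
    using JB unfolding Bset_def Omega1_def L_def by auto
  have JBd: "\<And>i j. i \<in> {1..k} \<Longrightarrow> j \<in> {1..k} \<Longrightarrow> i \<noteq> j \<Longrightarrow> J i \<inter> J j = {}"
    using JB unfolding Bset_def by auto
  have JBc: "\<And>i. i \<in> {1..k} \<Longrightarrow> real (card (J i)) \<le> 4 * T"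
  proof -
    fix i assume "i \<in> {1..k}"
    then have "\<bar>real (card (J i)) - 2 * T\<bar> \<le> \<delta> * T" using JB unfolding Bset_def T_def by auto
    moreover have "\<delta> * T \<le> 2 * T" using d2 T2 by (intro mult_right_mono) auto
    ultimately show "real (card (J i)) \<le> 4 * T" by linarith
  qed
  have cs: "cset n L k J"
    by unfold_locales (use k2 L4 L1 Ln JBs JBd in auto)
  have cs1: "\<And>i. i \<in> {1..k} \<Longrightarrow> cset n L 1 (\<lambda>_. J i)"
    by unfold_locales (use k2 L4 L1 Ln JBs in auto)
  define M where "M = {L+1..n}"
  have PSe: "PS n k J = (\<Prod>m\<in>M. gfun k J m)"
  proof -
    have "{c. \<forall>i\<in>{1..k}. Sset1 n c i = J i} = {c. \<forall>i\<in>{1..k}. Sset n c i - {1..L} = J i}"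
      unfolding Sset1_def L_def ..
    then show ?thesis unfolding PS_def M_def using prob_gfun[OF cs] by simp
  qed
  define h where "h m = (\<Prod>i\<in>{1..k}. gfun 1 (\<lambda>_. J i) m)" for m
  have PRe: "PR n k J = (\<Prod>m\<in>M. h m)"
  proof -
    have "\<And>i. i \<in> {1..k} \<Longrightarrow> measure_pmf.prob (coal_pmf n) {c. Sset1 n c 1 = J i} = (\<Prod>m\<in>M. gfun 1 (\<lambda>_. J i) m)"
    proof -
      fix i assume i: "i \<in> {1..k}"
      have "{c. Sset1 n c 1 = J i} = {c. \<forall>i'\<in>{1..1}. Sset n c i' - {1..L} = (\<lambda>_. J i) i'}"
        unfolding Sset1_def L_def by simp
      then show "measure_pmf.prob (coal_pmf n) {c. Sset1 n c 1 = J i} = (\<Prod>m\<in>M. gfun 1 (\<lambda>_. J i) m)"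
        unfolding M_def using prob_gfun[OF cs1[OF i]] by simp
    qed
    then have "PR n k J = (\<Prod>i\<in>{1..k}. \<Prod>m\<in>M. gfun 1 (\<lambda>_. J i) m)" unfolding PR_def by simp
    also have "\<dots> = (\<Prod>m\<in>M. h m)" unfolding h_def by (rule prod.swap)
    finally show ?thesis .
  qed
  define b where "b m = (if \<exists>i\<in>{1..k}. m \<in> J i then 4*real k/real m else 8*real k^2/(real m)^2)" for m
  have mM: "\<And>m. m \<in> M \<Longrightarrow> 4 * real k \<le> real m \<and> 2 \<le> m \<and> k \<le> m"
  proof -
    fix m assume "m \<in> M"
    then have "L + 1 \<le> m" unfolding M_def by auto
    then show "4 * real k \<le> real m \<and> 2 \<le> m \<and> k \<le> m" using L4 k2 by linarith
  qed
  have bnd: "\<And>m. m \<in> M \<Longrightarrow> exp (- b m) * h m \<le> gfun k J m \<and> gfun k J m \<le> exp (b m) * h m"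
  proof -
    fix m assume m: "m \<in> M"
    note mm = mM[OF m]
    have k1: "1 \<le> k" using k2 by simp
    show "exp (- b m) * h m \<le> gfun k J m \<and> gfun k J m \<le> exp (b m) * h m"
    proof (cases "\<exists>i\<in>{1..k}. m \<in> J i")
      case True
      then obtain i0 where i0: "i0 \<in> {1..k}" "m \<in> J i0" by blast
      have oth: "\<And>i. i \<in> {1..k} \<Longrightarrow> i \<noteq> i0 \<Longrightarrow> m \<notin> J i" using JBd i0 by blast
      have hm: "h m = (2 / real m) * ((real m - 2) / real m)^(k-1)"
        unfolding h_def using h_J[of i0 k m J, OF i0 oth] mm by auto
      have gm: "gfun k J m = 2 * (real m - real k) / (real m * (real m - 1))"
        using gfun_J[of i0 k m J, OF i0] mm by auto
      have bm: "b m = 4*real k/real m" unfolding b_def using True by simp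
      show ?thesis unfolding hm gm bm using termJ[OF k1, of "real m"] mm by simp
    next
      case False
      have hm: "h m = ((real m - 2) / real m)^k" unfolding h_def using h_N[OF False] mm by auto
      have gm: "gfun k J m = (real m - real k) * (real m - real k - 1) / (real m * (real m - 1))"
        using gfun_N[OF False] mm by auto
      have bm: "b m = 8*real k^2/(real m)^2" unfolding b_def using False by simp
      show ?thesis unfolding hm gm bm using termN[OF k1, of "real m"] mm by simp
    qed
  qed
  have h0: "\<And>m. 0 \<le> h m" unfolding h_def by (intro prod_nonneg) (simp add: gfun_nonneg)
  have finM: "finite M" unfolding M_def by simp
  define S where "S = (\<Sum>m\<in>M. b m)"
  have up: "PS n k J \<le> exp S * PR n k J"
  proof -
    have "PS n k J \<le> (\<Prod>m\<in>M. exp (b m) * h m)" unfolding PSe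
      using bnd gfun_nonneg by (intro prod_mono) auto
    also have "\<dots> = exp S * PR n k J" unfolding PRe S_def prod.distrib exp_sum[OF finM] ..
    finally show ?thesis .
  qed
  have lo: "exp (- S) * PR n k J \<le> PS n k J"
  proof -
    have "exp (- S) * PR n k J = (\<Prod>m\<in>M. exp (- b m) * h m)"
      unfolding PRe S_def prod.distrib sum_negf[symmetric] exp_sum[OF finM] ..
    also have "\<dots> \<le> PS n k J" unfolding PSe
      using bnd h0 by (intro prod_mono) auto
    finally show ?thesis .
  qed
  define U where "U = (\<Union>i\<in>{1..k}. J i)"
  have UM: "U \<subseteq> M" unfolding U_def M_def using JBs by blast
  have finU: "finite U" using UM finM by (rule finite_subset)
  have cardU: "real (card U) \<le> real k * (4 * T)"
  proof -
    have "card U \<le> (\<Sum>i\<in>{1..k}. card (J i))" unfolding U_def by (rule card_UN_le) simp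
    then have "real (card U) \<le> (\<Sum>i\<in>{1..k}. real (card (J i)))" by (metis of_nat_le_iff of_nat_sum)
    also have "\<dots> \<le> (\<Sum>i\<in>{1..k}. 4 * T)" using JBc by (intro sum_mono) auto
    finally show ?thesis by simp
  qed
  have bb: "\<And>m. m \<in> M \<Longrightarrow> b m \<le> (if m \<in> U then 4*real k/real m else 0) + 8*real k^2 * (1/(real m)^2)"
    unfolding b_def U_def by auto
  have "S \<le> (\<Sum>m\<in>M. (if m \<in> U then 4*real k/real m else 0) + 8*real k^2 * (1/(real m)^2))"
    unfolding S_def using bb by (rule sum_mono)
  also have "\<dots> = (\<Sum>m\<in>U. 4*real k/real m) + 8*real k^2 * (\<Sum>m\<in>M. 1/(real m)^2)"
  proof -
    have "(\<Sum>m\<in>M. if m \<in> U then 4*real k/real m else 0) = (\<Sum>m\<in>U. 4*real k/real m)"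
      using sum.inter_restrict[OF finM, of "\<lambda>m. 4*real k/real m" U] UM by (simp add: Int_absorb1)
    then show ?thesis unfolding sum.distrib sum_distrib_left[symmetric] by simp
  qed
  also have "\<dots> \<le> 16*real k^2/T + 8*real k^2/T"
  proof -
    have s1: "(\<Sum>m\<in>U. 4*real k/real m) \<le> real (card U) * (4*real k/T^2)"
    proof (rule sum_bounded_above)
      fix m assume "m \<in> U"
      then have "L + 1 \<le> m" using UM unfolding M_def by auto
      then have "T^2 \<le> real m" using LT by linarith
      moreover have "0 < T^2" using T2 by simp
      moreover have "0 < real m" using \<open>T^2 \<le> real m\<close> \<open>0 < T^2\<close> by linarith
      then have "0 < real m * T^2" using \<open>0 < T^2\<close> by (rule mult_pos_pos)
      ultimately show "4*real k/real m \<le> 4*real k/T^2" using kp by (intro divide_left_mono) auto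
    qed
    also have "\<dots> \<le> real k * (4 * T) * (4*real k/T^2)"
      using cardU kp T2 by (intro mult_right_mono) auto
    also have "\<dots> = 16*real k^2/T" using T2 by (simp add: field_simps power2_eq_square)
    finally have s1': "(\<Sum>m\<in>U. 4*real k/real m) \<le> 16*real k^2/T" .
    have "(\<Sum>m\<in>M. 1/(real m)^2) \<le> 1 / real L - 1 / real n" unfolding M_def by (rule tele[OF L1 Ln])
    also have "\<dots> \<le> 1 / T"
    proof -
      have "1 / real L \<le> 1 / T" using LT2 T2 by (intro divide_left_mono) auto
      moreover have "0 \<le> 1 / real n" by simp
      ultimately show ?thesis by linarith
    qed
    finally have s2: "8*real k^2 * (\<Sum>m\<in>M. 1/(real m)^2) \<le> 8*real k^2 * (1/T)"
      by (intro mult_left_mono) auto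
    show ?thesis using s1' s2 by simp
  qed
  also have "\<dots> = 24*real k^2/T" by simp
  also have "\<dots> \<le> \<eta>"
  proof -
    have "24*real k^2/T \<le> 24*real k^2/(24*real k^2/\<eta>)"
    proof (rule divide_left_mono)
      show "24*real k^2/\<eta> \<le> T" by (rule Teta)
      show "0 \<le> 24*real k^2" by simp
      have "0 < 24*real k^2/\<eta>" using kp \<eta> by simp
      moreover have "0 < T" using T2 by simp
      ultimately show "0 < T * (24*real k^2/\<eta>)" by (simp only: mult_pos_pos)
    qed
    also have "\<dots> = \<eta>" using kp by simp
    finally show ?thesis .
  qed
  finally have Seta: "S \<le> \<eta>" .
  have PR0: "0 \<le> PR n k J" unfolding PRe using h0 by (intro prod_nonneg) auto
  have eS: "exp S \<le> 1 + \<epsilon>" using Seta e0 unfolding \<eta>_def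
    by (metis add_pos_pos exp_le_cancel_iff exp_ln zero_less_one)
  have eS2: "1 - \<epsilon> \<le> exp (- S)"
  proof -
    have "exp (- \<eta>) \<le> exp (- S)" using Seta by simp
    moreover have "exp (- \<eta>) = 1 / (1 + \<epsilon>)" unfolding \<eta>_def using e0 by (simp add: exp_minus inverse_eq_divide)
    moreover have "1 - \<epsilon> \<le> 1 / (1 + \<epsilon>)"
    proof -
      have "(1 - \<epsilon>) * (1 + \<epsilon>) \<le> 1" by (simp add: algebra_simps)
      then show ?thesis using e0 by (simp add: field_simps)
    qed
    ultimately show ?thesis by linarith
  qed
  have "PS n k J \<le> (1 + \<epsilon>) * PR n k J" using up eS PR0 by (meson mult_right_mono order_trans)
  moreover have "(1 - \<epsilon>) * PR n k J \<le> PS n k J" using lo eS2 PR0 by (meson mult_right_mono order_trans)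
  ultimately show ?thesis by (simp add: abs_le_iff algebra_simps)
qed


theorem proposition4p5:
  fixes k :: nat and \<delta> :: real
  assumes "k \<ge> 2" and "0 < \<delta>" and "\<delta> < 2"
  shows "\<forall>\<epsilon>>0. eventually (\<lambda>n. \<forall>J\<in>Bset n k \<delta>.
            \<bar>PS n k J - PR n k J\<bar> \<le> \<epsilon> * PR n k J) sequentially"
proof (intro allI impI)
  fix \<epsilon> :: real assume e0: "\<epsilon> > 0"
  define C0 where "C0 = 2 + 4*real k + 24*real k^2/ln (1+\<epsilon>)"
  have ev1: "eventually (\<lambda>n. C0 \<le> ln (real n)) sequentially"
  proof -
    have "eventually (\<lambda>n. nat \<lceil>exp C0\<rceil> \<le> n) sequentially" by (rule eventually_ge_at_top)
    then show ?thesis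
    proof (rule eventually_mono)
      fix n assume "nat \<lceil>exp C0\<rceil> \<le> n"
      then have "exp C0 \<le> real n" by linarith
      then show "C0 \<le> ln (real n)"
        by (metis exp_gt_zero ln_exp ln_le_cancel_iff order_less_le_trans)
    qed
  qed
  have ev2: "eventually (\<lambda>n::nat. ln (real n)^2 \<le> real n) sequentially" by real_asymp
  have ev3: "eventually (\<lambda>n::nat. 1 \<le> n) sequentially" by (rule eventually_ge_at_top)
  show "eventually (\<lambda>n. \<forall>J\<in>Bset n k \<delta>. \<bar>PS n k J - PR n k J\<bar> \<le> \<epsilon> * PR n k J) sequentially"
    using ev1 ev2 ev3
  proof eventually_elim
    case (elim n)
    show ?case
    proof
      fix J assume "J \<in> Bset n k \<delta>"
      then show "\<bar>PS n k J - PR n k J\<bar> \<le> \<epsilon> * PR n k J"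
        using main_bound[OF assms(1,2,3) e0 elim(3) _ elim(2)] elim(1) unfolding C0_def by blast
    qed
  qed
qed

end
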